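(* Assume: (A1) $f(x,y)$ and each component of $g(x,y)$ are convex in $y$ for each fixed $x$, and $f,g$ are twice continuously differentiable; (A2) $Y\subseteq\mathbb{R}^m$ is a compact convex set with $\{y:\exists x\in X \text{ such that } g(x,y)\le 0\}\subseteq\mathrm{int}(Y)$; (R1) for each $x\in X$ there exists $y$ with $g(x,y)<0$. Then for every $x\in X$: the set $\arg\max_\lambda\{\psi(\lambda,x) : \lambda\ge 0\}$ is nonempty and compact, $\max_\lambda\{h(\lambda,x):\lambda\ge 0\}=\max_\lambda\{\psi(\lambda,x):\lambda\ge0\}$, and $\arg\max_\lambda\{h(\lambda,x):\lambda\ge 0\}=\arg\max_\lambda\{\psi(\lambda,x):\lambda\ge 0\}$.
   Context: Let $f:\mathbb{R}^n\times\mathbb{R}^m\to\mathbb{R}$, $g:\mathbb{R}^n\times\mathbb{R}^m\to\mathbb{R}^p$, $G:\mathbb{R}^n\to\mathbb{R}^q$; vector inequalities are componentwise. $X=\{x\in\mathbb{R}^n: G(x)\le 0\}$. For $\lambda\in\mathbb{R}^p$, the Lagrangian dual function is $\psi(\lambda,x)=\inf_{y\in\mathbb{R}^m}\{f(x,y)+\lambda^{\mathsf T}g(x,y)\}$ (possibly $-\infty$), and the constrained Lagrangian dual function is $h(\lambda,x)=\min_{y}\{f(x,y)+\lambda^{\mathsf T}g(x,y) : y\in Y\}$, with $Y$ the set from (A2). *)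

theory Defs
  imports "HOL-Analysis.Analysis"
begin

definition C2 :: "('a::euclidean_space \<Rightarrow> real) \<Rightarrow> bool" where
  "C2 F \<longleftrightarrow> (\<exists>DF :: 'a \<Rightarrow> 'a. \<exists>DDF :: 'a \<Rightarrow> ('a \<Rightarrow>\<^sub>L 'a).
      (\<forall>z. (F has_derivative (\<lambda>h. DF z \<bullet> h)) (at z)) \<and>
      (\<forall>z. (DF has_derivative blinfun_apply (DDF z)) (at z)) \<and>
      continuous_on UNIV DDF)"

definition vle :: "real^'k \<Rightarrow> real^'k \<Rightarrow> bool" where
  "vle u v \<longleftrightarrow> (\<forall>i. u $ i \<le> v $ i)"

definition vlt :: "real^'k \<Rightarrow> real^'k \<Rightarrow> bool" where
  "vlt u v \<longleftrightarrow> (\<forall>i. u $ i < v $ i)"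

text \<open>Lagrangian dual function (possibly -infinity).\<close>
definition psi ::
  "(real^'n \<Rightarrow> real^'m \<Rightarrow> real) \<Rightarrow> (real^'n \<Rightarrow> real^'m \<Rightarrow> real^'p)
     \<Rightarrow> real^'p \<Rightarrow> real^'n \<Rightarrow> ereal" where
  "psi f g l x = (INF y\<in>UNIV. ereal (f x y + l \<bullet> g x y))"

text \<open>Constrained Lagrangian dual function (minimum over Y, attained for
  compact nonempty Y and continuous integrand).\<close>
definition hdual ::
  "(real^'n \<Rightarrow> real^'m \<Rightarrow> real) \<Rightarrow> (real^'n \<Rightarrow> real^'m \<Rightarrow> real^'p) \<Rightarrow> (real^'m) set
     \<Rightarrow> real^'p \<Rightarrow> real^'n \<Rightarrow> real" where
  "hdual f g Y l x = Inf ((\<lambda>y. f x y + l \<bullet> g x y) ` Y)"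

definition argmax_on :: "('a \<Rightarrow> 'b::order) \<Rightarrow> 'a set \<Rightarrow> 'a set" where
  "argmax_on F S = {z \<in> S. \<forall>w\<in>S. F w \<le> F z}"

end

theory Submission
  imports Defs
begin

lemma inner_sum_real: "(l::real^'p) \<bullet> v = (\<Sum>i\<in>UNIV. l$i * v$i)"
  by (simp add: inner_vec_def)

lemma conv_L:
  fixes F :: "real^'m \<Rightarrow> real" and H :: "real^'m \<Rightarrow> real^'p"
  assumes cF: "convex_on UNIV F" and cH: "\<And>i. convex_on UNIV (\<lambda>y. H y $ i)"
    and l: "vle 0 l" and t: "0 \<le> t" "t \<le> 1"
  shows "F ((1-t) *\<^sub>R a + t *\<^sub>R b) + l \<bullet> H ((1-t) *\<^sub>R a + t *\<^sub>R b)
     \<le> (1-t) * (F a + l \<bullet> H a) + t * (F b + l \<bullet> H b)"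
proof -
  let ?z = "(1-t) *\<^sub>R a + t *\<^sub>R b"
  have 1: "F ?z \<le> (1-t) * F a + t * F b" using convex_onD[OF cF t] by simp
  have "l \<bullet> H ?z = (\<Sum>i\<in>UNIV. l$i * H ?z $i)" by (rule inner_sum_real)
  also have "\<dots> \<le> (\<Sum>i\<in>UNIV. l$i * ((1-t) * H a $ i + t * H b $ i))"
  proof (rule sum_mono)
    fix i
    have "H ?z $ i \<le> (1-t) * H a $ i + t * H b $ i" using convex_onD[OF cH t] by simp
    moreover have "0 \<le> l$i" using l by (simp add: vle_def)
    ultimately show "l$i * H ?z $i \<le> l$i * ((1-t) * H a $ i + t * H b $ i)"
      by (simp add: mult_left_mono)
  qed
  also have "\<dots> = (\<Sum>i\<in>UNIV. (1-t) * (l$i * H a $ i) + t * (l$i * H b $ i))"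
    by (rule sum.cong) (auto simp: algebra_simps)
  also have "\<dots> = (1-t) * (l \<bullet> H a) + t * (l \<bullet> H b)"
    by (simp add: inner_sum_real sum_distrib_left sum.distrib)
  finally show ?thesis using 1 by (simp add: algebra_simps)
qed

lemma strong_dual:
  fixes F :: "real^'m \<Rightarrow> real" and H :: "real^'m \<Rightarrow> real^'p"
  assumes cF: "convex_on UNIV F" and cH: "\<And>i. convex_on UNIV (\<lambda>y. H y $ i)"
    and sl: "vlt (H y0) 0" and pmin: "\<And>y. vle (H y) 0 \<Longrightarrow> p \<le> F y"
  shows "\<exists>ls. vle 0 ls \<and> (\<forall>y. p \<le> F y + ls \<bullet> H y)"
proof -
  define S where "S = {z :: (real^'p) \<times> real. \<exists>y. vle (H y) (fst z) \<and> F y - p < snd z}"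
  have cS: "convex S"
  proof (rule convexI)
    fix z1 z2 :: "(real^'p) \<times> real" and u v :: real
    assume z1: "z1 \<in> S" and z2: "z2 \<in> S" and u: "0 \<le> u" and v: "0 \<le> v" and uv: "u + v = 1"
    obtain y1 where y1: "vle (H y1) (fst z1)" "F y1 - p < snd z1" using z1 S_def by auto
    obtain y2 where y2: "vle (H y2) (fst z2)" "F y2 - p < snd z2" using z2 S_def by auto
    have t: "0 \<le> v" "v \<le> 1" using u v uv by auto
    have u1: "u = 1 - v" using uv by simp
    let ?y = "u *\<^sub>R y1 + v *\<^sub>R y2"
    have "vle (H ?y) (fst (u *\<^sub>R z1 + v *\<^sub>R z2))"
      unfolding vle_def
    proof
      fix i
      have "H ?y $ i \<le> u * H y1 $ i + v * H y2 $ i"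
        using convex_onD[OF cH t, of y1 y2 i] u1 by simp
      also have "\<dots> \<le> u * fst z1 $ i + v * fst z2 $ i"
        using y1(1) y2(1) u v unfolding vle_def
        by (intro add_mono mult_left_mono) auto
      finally show "H ?y $ i \<le> fst (u *\<^sub>R z1 + v *\<^sub>R z2) $ i" by simp
    qed
    moreover have "F ?y - p < snd (u *\<^sub>R z1 + v *\<^sub>R z2)"
    proof -
      have "F ?y \<le> u * F y1 + v * F y2" using convex_onD[OF cF t, of y1 y2] u1 by simp
      moreover have "u * (F y1 - p) + v * (F y2 - p) < u * snd z1 + v * snd z2"
      proof (cases "u = 0")
        case True then show ?thesis using uv y2 by simp
      next
        case False
        then have "u * (F y1 - p) < u * snd z1" using u y1 by simp
        moreover have "v * (F y2 - p) \<le> v * snd z2" using v y2 by (simp add: mult_left_mono)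
        ultimately show ?thesis by simp
      qed
      moreover have "p * u + p * v = p" using uv by (metis distrib_left mult_1_right)
      ultimately show ?thesis by (simp add: algebra_simps)
    qed
    ultimately show "u *\<^sub>R z1 + v *\<^sub>R z2 \<in> S" unfolding S_def by blast
  qed
  have 0: "0 \<notin> S"
  proof
    assume "0 \<in> S"
    then obtain y where "vle (H y) 0" "F y - p < 0" unfolding S_def by auto
    with pmin show False by force
  qed
  obtain a where a0: "a \<noteq> 0" and aS: "\<forall>z\<in>S. 0 \<le> a \<bullet> z"
    using separating_hyperplane_set_0[OF cS 0] by blast
  define lam where "lam = fst a"
  define mu where "mu = snd a"
  have KEY: "0 \<le> lam \<bullet> u + mu * t" if "vle (H y) u" "F y - p < t" for y u t
  proof -
    have "(u,t) \<in> S" using that S_def by auto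
    with aS have "0 \<le> a \<bullet> (u,t)" by blast
    moreover have "a = (lam, mu)" by (simp add: lam_def mu_def)
    ultimately show ?thesis by simp
  qed
  have vH0: "vle (H y0) (H y0)" by (simp add: vle_def)
  have mu0: "0 \<le> mu"
  proof (rule ccontr)
    assume "\<not> 0 \<le> mu"
    then have m: "mu < 0" by simp
    define A where "A = lam \<bullet> H y0 + mu * (F y0 - p + 1)"
    define c where "c = (\<bar>A\<bar> + 1) / (- mu)"
    have "0 \<le> lam \<bullet> H y0 + mu * (F y0 - p + 1 + c)"
      by (rule KEY[OF vH0]) (use m in \<open>simp add: c_def divide_nonneg_pos\<close>)
    moreover have "mu * c = - (\<bar>A\<bar> + 1)" using m by (simp add: c_def)
    ultimately have "0 \<le> A - (\<bar>A\<bar> + 1)" by (simp add: A_def algebra_simps)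
    then show False by simp
  qed
  have lam0: "vle 0 lam"
    unfolding vle_def
  proof (rule allI, rule ccontr)
    fix i assume "\<not> 0 $ i \<le> lam $ i"
    then have m: "lam $ i < 0" by simp
    define A where "A = lam \<bullet> H y0 + mu * (F y0 - p + 1)"
    define c where "c = (\<bar>A\<bar> + 1) / (- lam $ i)"
    have c0: "0 \<le> c" using m unfolding c_def by (intro divide_nonneg_pos) auto
    have "vle (H y0) (H y0 + c *\<^sub>R axis i 1)"
      unfolding vle_def using c0 by (auto simp: axis_def)
    then have "0 \<le> lam \<bullet> (H y0 + c *\<^sub>R axis i 1) + mu * (F y0 - p + 1)"
      by (rule KEY) simp
    moreover have "lam \<bullet> (H y0 + c *\<^sub>R axis i 1) = lam \<bullet> H y0 + c * lam $ i"
      by (simp add: inner_add_right inner_axis)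
    moreover have "c * lam $ i = - (\<bar>A\<bar> + 1)" using m by (simp add: c_def)
    ultimately have "0 \<le> A - (\<bar>A\<bar> + 1)" by (simp add: A_def algebra_simps)
    then show False by simp
  qed
  have all: "0 \<le> lam \<bullet> H y + mu * (F y - p)" for y
  proof (rule ccontr)
    assume "\<not> ?thesis"
    then obtain d where d: "d > 0" "lam \<bullet> H y + mu * (F y - p) = - d"
      by (metis add.inverse_inverse neg_0_less_iff_less not_le)
    define e where "e = d / (2 * (mu + 1))"
    have e0: "0 < e" using d mu0 by (simp add: e_def)
    have "0 \<le> lam \<bullet> H y + mu * (F y - p + e)"
      by (rule KEY) (auto simp: vle_def e0)
    moreover have "mu * e \<le> d / 2"
    proof -
      have "mu * e = d * (mu / (2 * (mu + 1)))" by (simp add: e_def)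
      also have "\<dots> \<le> d * (1/2)"
        using mu0 d by (intro mult_left_mono) (auto simp: field_simps)
      finally show ?thesis by simp
    qed
    ultimately show False using d by (simp add: algebra_simps)
  qed
  have mupos: "0 < mu"
  proof (rule ccontr)
    assume "\<not> 0 < mu"
    then have mu_0: "mu = 0" using mu0 by simp
    then have "lam \<noteq> 0" using a0 by (metis lam_def mu_def prod.collapse zero_prod_def)
    then obtain j where j: "lam $ j \<noteq> 0" by (metis vec_eq_iff zero_index)
    then have j': "0 < lam $ j" using lam0 by (simp add: vle_def order_less_le)
    have "0 \<le> lam \<bullet> H y0" using all[of y0] mu_0 by simp
    moreover have "lam $ j * (- H y0 $ j) \<le> (\<Sum>i\<in>UNIV. lam $ i * (- H y0 $ i))"
    proof (rule member_le_sum)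
      fix x
      have "0 \<le> lam $ x" "0 \<le> - H y0 $ x" using lam0 sl by (auto simp: vle_def vlt_def less_imp_le)
      then show "0 \<le> lam $ x * (- H y0 $ x)" by (rule mult_nonneg_nonneg)
    qed auto
    moreover have "0 < lam $ j * (- H y0 $ j)" using j' sl by (simp add: vlt_def mult_pos_neg)
    moreover have "(\<Sum>i\<in>UNIV. lam $ i * (- H y0 $ i)) = - (lam \<bullet> H y0)"
      by (simp add: inner_sum_real sum_negf)
    ultimately show False by linarith
  qed
  define ls where "ls = (1/mu) *\<^sub>R lam"
  have "vle 0 ls" using lam0 mupos by (simp add: ls_def vle_def)
  moreover have "p \<le> F y + ls \<bullet> H y" for y
  proof -
    have "0 \<le> (lam \<bullet> H y + mu * (F y - p)) / mu" using all[of y] mupos by simp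
    also have "\<dots> = ls \<bullet> H y + (F y - p)" using mupos by (simp add: ls_def field_simps)
    finally show ?thesis by simp
  qed
  ultimately show ?thesis by blast
qed

lemma main_dual:
  fixes F :: "real^'m \<Rightarrow> real" and H :: "real^'m \<Rightarrow> real^'p" and Y :: "(real^'m) set"
  assumes ctF: "continuous_on UNIV F" and ctH: "\<And>i. continuous_on UNIV (\<lambda>y. H y $ i)"
    and cF: "convex_on UNIV F" and cH: "\<And>i. convex_on UNIV (\<lambda>y. H y $ i)"
    and Yc: "compact Y" and Yint: "{y. vle (H y) 0} \<subseteq> interior Y"
    and sl: "vlt (H y0) 0"
  shows "argmax_on (\<lambda>l. INF y\<in>UNIV. ereal (F y + l \<bullet> H y)) {l. vle 0 l} \<noteq> {} \<and>
        compact (argmax_on (\<lambda>l. INF y\<in>UNIV. ereal (F y + l \<bullet> H y)) {l. vle 0 l}) \<and>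
        (SUP l\<in>{l. vle 0 l}. ereal (Inf ((\<lambda>y. F y + l \<bullet> H y) ` Y))) = (SUP l\<in>{l. vle 0 l}. INF y\<in>UNIV. ereal (F y + l \<bullet> H y)) \<and>
        argmax_on (\<lambda>l. Inf ((\<lambda>y. F y + l \<bullet> H y) ` Y)) {l. vle 0 l} = argmax_on (\<lambda>l. INF y\<in>UNIV. ereal (F y + l \<bullet> H y)) {l. vle 0 l}"
proof -
  define L where "L = {l::real^'p. vle 0 l}"
  define K where "K = {y. vle (H y) 0}"
  define P where "P = (\<lambda>l. INF y\<in>UNIV. ereal (F y + l \<bullet> H y))"
  define Q where "Q = (\<lambda>l. Inf ((\<lambda>y. F y + l \<bullet> H y) ` Y))"
  have ctHv: "continuous_on UNIV H"
  proof -
    have "continuous_on UNIV (\<lambda>y. \<chi> i. H y $ i)" by (rule continuous_on_vec_lambda) (rule ctH)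
    then show ?thesis by simp
  qed
  have ctL: "continuous_on S (\<lambda>y. F y + l \<bullet> H y)" for l S
    by (intro continuous_on_add continuous_on_inner continuous_on_const
        continuous_on_subset[OF ctF] continuous_on_subset[OF ctHv]) auto
  have Kcl: "closed K"
    unfolding K_def vle_def
    by (intro closed_Collect_all closed_Collect_le ctH continuous_on_const)
  have KY: "K \<subseteq> Y" using Yint interior_subset K_def by blast
  have Kc: "compact K"
  proof -
    have "Y \<inter> K = K" using KY by blast
    then show ?thesis using compact_Int_closed[OF Yc Kcl] by simp
  qed
  have y0K: "y0 \<in> K" using sl by (simp add: K_def vle_def vlt_def less_imp_le)
  obtain ys where ysK: "ys \<in> K" and ysmin: "\<And>y. y \<in> K \<Longrightarrow> F ys \<le> F y"
    using continuous_attains_inf[OF Kc _ continuous_on_subset[OF ctF]] y0K by blast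
  define p where "p = F ys"
  have ysY: "ys \<in> interior Y" using ysK Yint K_def by blast
  have Yne: "Y \<noteq> {}" using ysY interior_subset by blast
  obtain ls where lsL: "vle 0 ls" and ls: "\<And>y. p \<le> F y + ls \<bullet> H y"
    using strong_dual[OF cF cH sl, of p] ysmin unfolding p_def K_def by blast
  have weak: "F ys + l \<bullet> H ys \<le> p" if "vle 0 l" for l
  proof -
    have "l \<bullet> H ys = (\<Sum>i\<in>UNIV. l$i * H ys $ i)" by (rule inner_sum_real)
    also have "\<dots> \<le> 0"
      using that ysK by (intro sum_nonpos mult_nonneg_nonpos) (auto simp: vle_def K_def)
    finally show ?thesis by (simp add: p_def)
  qed
  define D where "D = {l. vle 0 l \<and> (\<forall>y. p \<le> F y + l \<bullet> H y)}"
  have lsD: "ls \<in> D" using lsL ls D_def by blast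
  have P_le: "P l \<le> ereal p" if "l \<in> L" for l
    unfolding P_def using weak[of l] that L_def by (intro INF_lower2[of ys]) auto
  have P_D: "P l = ereal p" if "l \<in> D" for l
  proof (rule antisym)
    show "P l \<le> ereal p" using P_le that D_def L_def by blast
    show "ereal p \<le> P l" unfolding P_def using that D_def by (intro INF_greatest) auto
  qed
  have argP: "argmax_on P L = D"
  proof
    show "argmax_on P L \<subseteq> D"
    proof
      fix l assume "l \<in> argmax_on P L"
      then have lL: "l \<in> L" and "P ls \<le> P l" using lsD unfolding argmax_on_def D_def L_def by auto
      then have "ereal p \<le> P l" using P_D[OF lsD] by simp
      moreover have "P l \<le> ereal (F y + l \<bullet> H y)" for y unfolding P_def by (rule INF_lower) simp
      ultimately have "ereal p \<le> ereal (F y + l \<bullet> H y)" for y by (rule order_trans)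
      then show "l \<in> D" using lL by (simp add: D_def L_def)
    qed
    show "D \<subseteq> argmax_on P L"
      unfolding argmax_on_def using P_D P_le by (auto simp: D_def L_def)
  qed
  have supP: "(SUP l\<in>L. P l) = ereal p"
  proof (rule antisym)
    show "(SUP l\<in>L. P l) \<le> ereal p" using P_le by (intro SUP_least) auto
    show "ereal p \<le> (SUP l\<in>L. P l)" using P_D[OF lsD] lsD
      by (intro SUP_upper2[of ls]) (auto simp: D_def L_def)
  qed
  have bdd: "bdd_below ((\<lambda>y. F y + l \<bullet> H y) ` Y)" for l
    by (intro bounded_imp_bdd_below compact_imp_bounded compact_continuous_image ctL Yc)
  have Q_le: "Q l \<le> p" if "l \<in> L" for l
    unfolding Q_def using weak[of l] that L_def ysY interior_subset
    by (intro cInf_lower2[OF _ _ bdd]) auto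
  have Q_ge: "p \<le> Q l" if "\<forall>y\<in>Y. p \<le> F y + l \<bullet> H y" for l
    unfolding Q_def using that Yne by (intro cInf_greatest) auto
  have Q_ge_D: "\<forall>y\<in>Y. p \<le> F y + l \<bullet> H y" if pq: "p \<le> Q l" for l
  proof
    fix y assume y: "y \<in> Y"
    have "Q l \<le> F y + l \<bullet> H y" unfolding Q_def by (rule cInf_lower[OF _ bdd]) (use y in simp)
    then show "p \<le> F y + l \<bullet> H y" using pq by linarith
  qed
  have inter: "l \<in> D" if lL: "l \<in> L" and hY: "\<forall>y\<in>Y. p \<le> F y + l \<bullet> H y" for l
  proof -
    obtain e where e: "e > 0" "ball ys e \<subseteq> Y" using ysY mem_interior by blast
    have "p \<le> F y + l \<bullet> H y" for y
    proof (cases "y = ys")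
      case True then show ?thesis using hY ysY interior_subset by blast
    next
      case False
      then have n: "norm (y - ys) > 0" by simp
      define t where "t = min 1 (e / (2 * norm (y - ys)))"
      have t0: "0 < t" "t \<le> 1" using e n by (auto simp: t_def)
      let ?z = "(1-t) *\<^sub>R ys + t *\<^sub>R y"
      have "dist ys ?z = t * norm (y - ys)"
      proof -
        have "ys - ?z = t *\<^sub>R (ys - y)" by (simp add: algebra_simps)
        then show ?thesis using t0 by (simp add: dist_norm norm_minus_commute)
      qed
      also have "\<dots> \<le> e / (2 * norm (y - ys)) * norm (y - ys)"
        using n by (intro mult_right_mono) (auto simp: t_def)
      also have "\<dots> < e" using n e by simp
      finally have "?z \<in> Y" using e by auto
      then have "p \<le> F ?z + l \<bullet> H ?z" using hY by blast
      also have "\<dots> \<le> (1-t) * (F ys + l \<bullet> H ys) + t * (F y + l \<bullet> H y)"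
        using conv_L[OF cF cH _ _ _ , of l t ys y] lL t0 by (simp add: L_def)
      also have "\<dots> \<le> (1-t) * p + t * (F y + l \<bullet> H y)"
        using weak[of l] lL t0 by (intro add_mono mult_left_mono) (auto simp: L_def)
      finally have "t * p \<le> t * (F y + l \<bullet> H y)" by (simp add: algebra_simps)
      then show ?thesis using t0 by simp
    qed
    then show ?thesis using lL by (simp add: D_def L_def)
  qed
  have Q_D: "Q l = p" if lD: "l \<in> D" for l
  proof -
    have "l \<in> L" using lD by (simp add: D_def L_def)
    then have "Q l \<le> p" by (rule Q_le)
    moreover have "p \<le> Q l" using lD by (intro Q_ge) (simp add: D_def)
    ultimately show ?thesis by simp
  qed
  have argQ: "argmax_on Q L = D"
  proof
    show "argmax_on Q L \<subseteq> D"
    proof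
      fix l assume "l \<in> argmax_on Q L"
      then have lL: "l \<in> L" and "Q ls \<le> Q l" using lsD unfolding argmax_on_def D_def L_def by auto
      then have "p \<le> Q l" using Q_D[OF lsD] by simp
      then show "l \<in> D" using inter lL Q_ge_D by blast
    qed
    show "D \<subseteq> argmax_on Q L"
      unfolding argmax_on_def using Q_D Q_le by (auto simp: D_def L_def)
  qed
  have supQ: "(SUP l\<in>L. ereal (Q l)) = ereal p"
  proof (rule antisym)
    show "(SUP l\<in>L. ereal (Q l)) \<le> ereal p" using Q_le by (intro SUP_least) auto
    show "ereal p \<le> (SUP l\<in>L. ereal (Q l))" using Q_D[OF lsD] lsD
      by (intro SUP_upper2[of ls]) (auto simp: D_def L_def)
  qed
  have Dcl: "closed D"
  proof -
    have "D = {l. \<forall>i. 0 \<le> l $ i} \<inter> {l. \<forall>y. p \<le> F y + l \<bullet> H y}"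
      by (auto simp: D_def vle_def)
    moreover have "closed {l::real^'p. \<forall>i. 0 \<le> l $ i}"
      by (intro closed_Collect_all closed_Collect_le continuous_on_const continuous_on_component continuous_on_id)
    moreover have "closed {l. \<forall>y. p \<le> F y + l \<bullet> H y}"
      by (intro closed_Collect_all closed_Collect_le continuous_on_const continuous_on_add
          continuous_on_inner continuous_on_id)
    ultimately show ?thesis by auto
  qed
  have Dbd: "bounded D"
  proof -
    define B where "B = \<bar>F y0 - p\<bar>"
    have hneg: "0 < - H y0 $ i" for i using sl by (simp add: vlt_def)
    have comp: "l $ j \<le> B / (- H y0 $ j)" if "l \<in> D" for l j
    proof -
      have l0: "vle 0 l" and pl: "p \<le> F y0 + l \<bullet> H y0" using that D_def by auto
      have "l $ j * (- H y0 $ j) \<le> (\<Sum>i\<in>UNIV. l $ i * (- H y0 $ i))"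
      proof (rule member_le_sum)
        fix x
        have "0 \<le> l $ x" "0 \<le> - H y0 $ x" using l0 hneg[of x] by (auto simp: vle_def)
        then show "0 \<le> l $ x * (- H y0 $ x)" by (rule mult_nonneg_nonneg)
      qed auto
      also have "\<dots> = - (l \<bullet> H y0)" by (simp add: inner_sum_real sum_negf)
      also have "\<dots> \<le> B" using pl by (simp add: B_def)
      finally have "l $ j * (- H y0 $ j) \<le> B" .
      then show ?thesis by (subst pos_le_divide_eq[OF hneg[of j]])
    qed
    have "norm l \<le> (\<Sum>j\<in>UNIV. B / (- H y0 $ j))" if "l \<in> D" for l
    proof -
      have "norm l \<le> (\<Sum>j\<in>UNIV. \<bar>l $ j\<bar>)" by (rule norm_le_l1_cart)
      also have "\<dots> \<le> (\<Sum>j\<in>UNIV. B / (- H y0 $ j))"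
      proof (rule sum_mono)
        fix j
        have "0 \<le> l $ j" using that by (simp add: D_def vle_def)
        then show "\<bar>l $ j\<bar> \<le> B / (- H y0 $ j)" using comp[OF that, of j] by simp
      qed
      finally show ?thesis .
    qed
    then show ?thesis unfolding bounded_iff by blast
  qed
  have Dc: "compact D" using Dcl Dbd by (simp add: compact_eq_bounded_closed)
  have "argmax_on P L \<noteq> {} \<and> compact (argmax_on P L) \<and>
     (SUP l\<in>L. ereal (Q l)) = (SUP l\<in>L. P l) \<and> argmax_on Q L = argmax_on P L"
    using argP argQ supP supQ Dc lsD by (simp add: ex_in_conv[symmetric]; blast)
  then show ?thesis unfolding P_def Q_def L_def .
qed

lemma C2_cont: "C2 F \<Longrightarrow> continuous_on UNIV F"
  unfolding C2_def
  by (metis continuous_at_imp_continuous_on has_derivative_continuous)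

lemma cont_slice:
  fixes \<Phi> :: "(real^'n) \<times> (real^'m) \<Rightarrow> real"
  assumes "continuous_on UNIV \<Phi>"
  shows "continuous_on UNIV (\<lambda>y. \<Phi> (x, y))"
proof -
  have "continuous_on UNIV (\<Phi> \<circ> (\<lambda>y. (x, y)))"
    by (intro continuous_on_compose continuous_on_Pair continuous_on_const continuous_on_id
        continuous_on_subset[OF assms]) auto
  then show ?thesis by (simp add: o_def)
qed

theorem theorem1:
  fixes f :: "real^'n \<Rightarrow> real^'m \<Rightarrow> real"
    and g :: "real^'n \<Rightarrow> real^'m \<Rightarrow> real^'p"
    and G :: "real^'n \<Rightarrow> real^'q"
    and X :: "(real^'n) set" and Y :: "(real^'m) set"
  assumes X_def: "X = {x. vle (G x) 0}"
    and A1_convf: "\<And>x. convex_on UNIV (\<lambda>y. f x y)"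
    and A1_convg: "\<And>x i. convex_on UNIV (\<lambda>y. g x y $ i)"
    and A1_C2f: "C2 (\<lambda>z::(real^'n) \<times> (real^'m). f (fst z) (snd z))"
    and A1_C2g: "\<And>i. C2 (\<lambda>z::(real^'n) \<times> (real^'m). g (fst z) (snd z) $ i)"
    and A2_compact: "compact Y" and A2_convex: "convex Y"
    and A2_int: "{y. \<exists>x\<in>X. vle (g x y) 0} \<subseteq> interior Y"
    and R1: "\<And>x. x \<in> X \<Longrightarrow> \<exists>y. vlt (g x y) 0"
  shows "\<forall>x\<in>X.
     (let L = {l::real^'p. vle 0 l} in
        argmax_on (\<lambda>l. psi f g l x) L \<noteq> {} \<and>
        compact (argmax_on (\<lambda>l. psi f g l x) L) \<and>
        (SUP l\<in>L. ereal (hdual f g Y l x)) = (SUP l\<in>L. psi f g l x) \<and>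
        argmax_on (\<lambda>l. hdual f g Y l x) L = argmax_on (\<lambda>l. psi f g l x) L)"
proof
  fix x assume xX: "x \<in> X"
  obtain y0 where y0: "vlt (g x y0) 0" using R1[OF xX] by blast
  have cf: "continuous_on UNIV (\<lambda>y. f x y)"
    using cont_slice[OF C2_cont[OF A1_C2f], of x] by simp
  have cg: "continuous_on UNIV (\<lambda>y. g x y $ i)" for i
    using cont_slice[OF C2_cont[OF A1_C2g[of i]], of x] by simp
  have Yi: "{y. vle (g x y) 0} \<subseteq> interior Y" using A2_int xX by blast
  show "let L = {l::real^'p. vle 0 l} in
        argmax_on (\<lambda>l. psi f g l x) L \<noteq> {} \<and>
        compact (argmax_on (\<lambda>l. psi f g l x) L) \<and>
        (SUP l\<in>L. ereal (hdual f g Y l x)) = (SUP l\<in>L. psi f g l x) \<and>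
        argmax_on (\<lambda>l. hdual f g Y l x) L = argmax_on (\<lambda>l. psi f g l x) L"
    unfolding Let_def psi_def hdual_def
    using main_dual[of "\<lambda>y. f x y" "\<lambda>y. g x y", OF cf cg A1_convf A1_convg A2_compact Yi y0] .
qed

end
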